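(* Let $T$ be a complete dependent (NIP) first-order theory with monster model $\mathfrak{C}$. For $\ell<2$ let $\mathcal{D}_\ell$ be a proper filter on a set $I_\ell$, $m(\ell)<\omega$, and $\bar a_{\ell,t}\in {}^{m(\ell)}\mathfrak{C}$ for $t \in I_\ell$. Let $C\subseteq\mathfrak{C}$ and $\Delta$ be a set of formulas, both finite. Then there are $\mathcal{S}_0 \in \mathcal{D}_0^+$, $\mathcal{S}_1\in\mathcal{D}^+_1$ and a type $q$ such that $(\forall^{\mathcal{D}_0} s_0\in\mathcal{S}_0)(\forall^{\mathcal{D}_1} s_1\in \mathcal{S}_1)\,[q = \mathrm{tp}_\Delta(\bar a_{0,s_0}{}^\frown\bar a_{1,s_1}, C)]$.
   Context: For a filter $\mathcal{D}$ on $I$, $\mathcal{D}^+$ is the set of subsets of $I$ meeting every member of $\mathcal{D}$; for $\mathcal{S}\in\mathcal{D}^+$, "$(\forall^{\mathcal{D}} s\in\mathcal{S})\,\phi(s)$" means $\{s\in\mathcal{S}:\phi(s)\}$ belongs to the filter generated by $\mathcal{D}\cup\{\mathcal{S}\}$. $\mathrm{tp}_\Delta(\bar a, C)$ is the set of formulas $\varphi(\bar x,\bar c)^{\mathbf t}$ with $\varphi\in\Delta$, $\bar c$ from $C$, $\mathbf t$ a truth value, satisfied by $\bar a$. *)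

theory Defs
  imports Main
begin

datatype 'f trm = Var nat | Fn 'f "'f trm list"

datatype ('f, 'r) fm =
    FF
  | Eq "'f trm" "'f trm"
  | Rel 'r "'f trm list"
  | Neg "('f, 'r) fm"
  | Conj "('f, 'r) fm" "('f, 'r) fm"
  | Ex nat "('f, 'r) fm"

fun evalt :: "('f \<Rightarrow> 'a list \<Rightarrow> 'a) \<Rightarrow> (nat \<Rightarrow> 'a) \<Rightarrow> 'f trm \<Rightarrow> 'a" where
  "evalt F e (Var i) = e i"
| "evalt F e (Fn f ts) = F f (map (evalt F e) ts)"

fun fvt :: "'f trm \<Rightarrow> nat set" where
  "fvt (Var i) = {i}"
| "fvt (Fn f ts) = (\<Union>t\<in>set ts. fvt t)"

fun sat :: "('f \<Rightarrow> 'a list \<Rightarrow> 'a) \<Rightarrow> ('r \<Rightarrow> 'a list \<Rightarrow> bool) \<Rightarrow> ('f, 'r) fm \<Rightarrow> (nat \<Rightarrow> 'a) \<Rightarrow> bool" where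
  "sat F R FF e = False"
| "sat F R (Eq s t) e = (evalt F e s = evalt F e t)"
| "sat F R (Rel r ts) e = R r (map (evalt F e) ts)"
| "sat F R (Neg \<phi>) e = (\<not> sat F R \<phi> e)"
| "sat F R (Conj \<phi> \<psi>) e = (sat F R \<phi> e \<and> sat F R \<psi> e)"
| "sat F R (Ex x \<phi>) e = (\<exists>v. sat F R \<phi> (e(x := v)))"

fun fv :: "('f, 'r) fm \<Rightarrow> nat set" where
  "fv FF = {}"
| "fv (Eq s t) = fvt s \<union> fvt t"
| "fv (Rel r ts) = (\<Union>t\<in>set ts. fvt t)"
| "fv (Neg \<phi>) = fv \<phi>"
| "fv (Conj \<phi> \<psi>) = fv \<phi> \<union> fv \<psi>"
| "fv (Ex x \<phi>) = fv \<phi> - {x}"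

definition env :: "'a list \<Rightarrow> (nat \<Rightarrow> 'a) \<Rightarrow> nat \<Rightarrow> 'a" where
  "env xs b = (\<lambda>j. if j < length xs then xs ! j else b j)"

text \<open>The formula phi(x;y), with x the variables 0..k-1 and y the remaining ones,
  has the independence property in the structure (equivalently in its complete theory).\<close>
definition has_IP :: "('f \<Rightarrow> 'a list \<Rightarrow> 'a) \<Rightarrow> ('r \<Rightarrow> 'a list \<Rightarrow> bool) \<Rightarrow> ('f, 'r) fm \<Rightarrow> nat \<Rightarrow> bool" where
  "has_IP F R \<phi> k \<longleftrightarrow>
     (\<forall>n. \<exists>a :: nat \<Rightarrow> 'a list. (\<forall>i<n. length (a i) = k) \<and>
        (\<forall>S \<subseteq> {..<n}. \<exists>b :: nat \<Rightarrow> 'a. \<forall>i<n. (sat F R \<phi> (env (a i) b) \<longleftrightarrow> i \<in> S)))"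

definition NIP :: "('f \<Rightarrow> 'a list \<Rightarrow> 'a) \<Rightarrow> ('r \<Rightarrow> 'a list \<Rightarrow> bool) \<Rightarrow> bool" where
  "NIP F R \<longleftrightarrow> (\<forall>(\<phi> :: ('f, 'r) fm) k. \<not> has_IP F R \<phi> k)"

text \<open>tp_Delta(xs, C): the set of phi(x, c)^t with phi in Delta, c a tuple from C
  (x = variables 0..length xs - 1, the parameter variables following), t a truth value,
  satisfied by xs.\<close>
definition tp_Delta :: "('f \<Rightarrow> 'a list \<Rightarrow> 'a) \<Rightarrow> ('r \<Rightarrow> 'a list \<Rightarrow> bool) \<Rightarrow> ('f, 'r) fm set
    \<Rightarrow> 'a list \<Rightarrow> 'a set \<Rightarrow> (('f, 'r) fm \<times> 'a list \<times> bool) set" where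
  "tp_Delta F R \<Delta> xs C =
     {(\<phi>, cs, t). \<phi> \<in> \<Delta> \<and> set cs \<subseteq> C \<and> fv \<phi> \<subseteq> {..<length xs + length cs}
        \<and> sat F R \<phi> (\<lambda>j. (xs @ cs) ! j) = t}"

definition dplus :: "'i filter \<Rightarrow> 'i set set" where
  "dplus D = {S. \<forall>X. eventually (\<lambda>x. x \<in> X) D \<longrightarrow> S \<inter> X \<noteq> {}}"

definition forall_D :: "'i filter \<Rightarrow> 'i set \<Rightarrow> ('i \<Rightarrow> bool) \<Rightarrow> bool" where
  "forall_D D S P \<longleftrightarrow> eventually (\<lambda>s. s \<in> {s\<in>S. P s}) (inf D (principal S))"

end

theory Submission
  imports Defs
begin
lemma dplus_iff: "S \<in> dplus D \<longleftrightarrow> (\<exists>\<^sub>F x in D. x \<in> S)"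
  unfolding dplus_def frequently_def
proof safe
  assume A: "\<forall>X. eventually (\<lambda>x. x \<in> X) D \<longrightarrow> S \<inter> X \<noteq> {}" and B: "eventually (\<lambda>x. x \<notin> S) D"
  have "eventually (\<lambda>x. x \<in> - S) D" using B by simp
  then have "S \<inter> (- S) \<noteq> {}" using A by blast
  then show False by simp
next
  fix X x assume A: "\<not> eventually (\<lambda>x. x \<notin> S) D" and B: "eventually (\<lambda>x. x \<in> X) D" and C: "S \<inter> X = {}"
  have "eventually (\<lambda>x. x \<notin> S) D" using B by (rule eventually_mono) (use C in blast)
  then show False using A by simp
qed

lemma forall_D_iff: "forall_D D S P \<longleftrightarrow> eventually (\<lambda>x. x \<in> S \<longrightarrow> P x) D"
  unfolding forall_D_def eventually_inf_principal by simp

lemma bool_lemma: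
  fixes P :: "'i \<Rightarrow> 'j \<Rightarrow> bool" and D0 :: "'i filter" and D1 :: "'j filter"
  assumes D0: "D0 \<noteq> bot" and D1: "D1 \<noteq> bot"
    and noIP: "\<not> (\<forall>n. \<exists>s0::nat\<Rightarrow>'i. \<forall>S\<subseteq>{..<n}. \<exists>s1. \<forall>i<n. P (s0 i) s1 \<longleftrightarrow> i \<in> S)"
  shows "\<exists>S0 S1 v. S0 \<in> dplus D0 \<and> S1 \<in> dplus D1 \<and>
           forall_D D0 S0 (\<lambda>s0. forall_D D1 S1 (\<lambda>s1. P s0 s1 = v))"
proof (rule ccontr)
  assume H: "\<not> ?thesis"
  have E: "eventually (\<lambda>s0. \<not> eventually (\<lambda>s1. s1 \<in> T \<longrightarrow> P s0 s1 = v) D1) D0"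
    if T: "T \<in> dplus D1" for T v
  proof -
    let ?E = "{s0. eventually (\<lambda>s1. s1 \<in> T \<longrightarrow> P s0 s1 = v) D1}"
    have "?E \<notin> dplus D0"
    proof
      assume "?E \<in> dplus D0"
      moreover have "forall_D D0 ?E (\<lambda>s0. forall_D D1 T (\<lambda>s1. P s0 s1 = v))"
        by (simp add: forall_D_iff)
      ultimately show False using H T by blast
    qed
    thus ?thesis by (simp add: dplus_iff not_frequently)
  qed
  have split: "\<exists>s0. \<forall>T\<in>\<T>. {s1\<in>T. P s0 s1} \<in> dplus D1 \<and> {s1\<in>T. \<not> P s0 s1} \<in> dplus D1"
    if fin: "finite \<T>" and sub: "\<T> \<subseteq> dplus D1" for \<T>
  proof -
    have "eventually (\<lambda>s0. \<forall>T\<in>\<T>. \<not> eventually (\<lambda>s1. s1 \<in> T \<longrightarrow> P s0 s1 = True) D1) D0"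
      using E[of _ True] sub by (intro eventually_ball_finite fin) auto
    moreover have "eventually (\<lambda>s0. \<forall>T\<in>\<T>. \<not> eventually (\<lambda>s1. s1 \<in> T \<longrightarrow> P s0 s1 = False) D1) D0"
      using E[of _ False] sub by (intro eventually_ball_finite fin) auto
    ultimately obtain s0 where
      "\<forall>T\<in>\<T>. \<not> eventually (\<lambda>s1. s1 \<in> T \<longrightarrow> P s0 s1 = True) D1"
      "\<forall>T\<in>\<T>. \<not> eventually (\<lambda>s1. s1 \<in> T \<longrightarrow> P s0 s1 = False) D1"
      using eventually_happens'[OF D0, OF eventually_conj] by blast
    then show ?thesis
      by (intro exI[of _ s0]) (auto simp: dplus_iff frequently_def)
  qed
  have tree: "\<exists>s0::nat\<Rightarrow>'i. \<forall>S\<subseteq>{..<n}. {s1. \<forall>i<n. P (s0 i) s1 \<longleftrightarrow> i \<in> S} \<in> dplus D1" for n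
  proof (induction n)
    case 0
    then show ?case using D1 by (simp add: dplus_iff)
  next
    case (Suc n)
    then obtain s0 :: "nat \<Rightarrow> 'i" where s0: "\<forall>S\<subseteq>{..<n}. {s1. \<forall>i<n. P (s0 i) s1 \<longleftrightarrow> i \<in> S} \<in> dplus D1"
      by blast
    define T where "T = (\<lambda>S. {s1. \<forall>i<n. P (s0 i) s1 \<longleftrightarrow> i \<in> S})"
    have "finite (T ` Pow {..<n})" by simp
    moreover have "T ` Pow {..<n} \<subseteq> dplus D1" using s0 T_def by auto
    ultimately obtain s' where s': "\<forall>X\<in>T ` Pow {..<n}. {s1\<in>X. P s' s1} \<in> dplus D1 \<and> {s1\<in>X. \<not> P s' s1} \<in> dplus D1"
      using split by blast
    show ?case
    proof (intro exI[of _ "s0(n := s')"] allI impI)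
      fix S assume S: "S \<subseteq> {..<Suc n}"
      have S': "S - {n} \<in> Pow {..<n}" using S by auto
      have eq: "{s1. \<forall>i<Suc n. P ((s0(n := s')) i) s1 \<longleftrightarrow> i \<in> S} =
        {s1 \<in> T (S - {n}). P s' s1 \<longleftrightarrow> n \<in> S}"
        unfolding T_def by (auto simp: less_Suc_eq)
      show "{s1. \<forall>i<Suc n. P ((s0(n := s')) i) s1 \<longleftrightarrow> i \<in> S} \<in> dplus D1"
        unfolding eq using s'[rule_format, OF imageI[OF S']] by (cases "n \<in> S") auto
    qed
  qed
  have "\<forall>n. \<exists>s0::nat\<Rightarrow>'i. \<forall>S\<subseteq>{..<n}. \<exists>s1. \<forall>i<n. P (s0 i) s1 \<longleftrightarrow> i \<in> S"
  proof
    fix n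
    obtain s0 :: "nat \<Rightarrow> 'i" where s0: "\<forall>S\<subseteq>{..<n}. {s1. \<forall>i<n. P (s0 i) s1 \<longleftrightarrow> i \<in> S} \<in> dplus D1"
      using tree by blast
    show "\<exists>s0::nat\<Rightarrow>'i. \<forall>S\<subseteq>{..<n}. \<exists>s1. \<forall>i<n. P (s0 i) s1 \<longleftrightarrow> i \<in> S"
    proof (intro exI[of _ s0] allI impI)
      fix S assume "S \<subseteq> {..<n}"
      then have "\<exists>\<^sub>F x in D1. x \<in> {s1. \<forall>i<n. P (s0 i) s1 \<longleftrightarrow> i \<in> S}" using s0 dplus_iff by blast
      then show "\<exists>s1. \<forall>i<n. P (s0 i) s1 \<longleftrightarrow> i \<in> S" using frequently_ex by fastforce
    qed
  qed
  with noIP show False by blast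
qed

lemma dplus_nonbot: "S \<in> dplus D \<Longrightarrow> inf D (principal S) \<noteq> bot"
proof
  assume S: "S \<in> dplus D" and b: "inf D (principal S) = bot"
  have "eventually (\<lambda>x. False) (inf D (principal S))" using b by simp
  then have "eventually (\<lambda>x. x \<notin> S) D" unfolding eventually_inf_principal by simp
  then show False using S unfolding dplus_iff frequently_def by simp
qed

lemma multi_lemma:
  fixes P :: "'k \<Rightarrow> 'i \<Rightarrow> 'j \<Rightarrow> bool"
  assumes "finite K"
    and noIP: "\<And>k. k \<in> K \<Longrightarrow> \<not> (\<forall>n. \<exists>s0::nat\<Rightarrow>'i. \<forall>S\<subseteq>{..<n}. \<exists>s1. \<forall>i<n. P k (s0 i) s1 \<longleftrightarrow> i \<in> S)"
  shows "\<And>D0 D1. D0 \<noteq> bot \<Longrightarrow> D1 \<noteq> bot \<Longrightarrow> \<exists>S0 S1 v. S0 \<in> dplus D0 \<and> S1 \<in> dplus D1 \<and>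
           forall_D D0 S0 (\<lambda>s0. forall_D D1 S1 (\<lambda>s1. \<forall>k\<in>K. P k s0 s1 = v k))"
  using assms
proof (induction K rule: finite_induct)
  case empty
  then show ?case by (intro exI[of _ UNIV]) (simp add: dplus_iff forall_D_iff)
next
  case (insert k K D0 D1)
  have "\<exists>S0 S1 v. S0 \<in> dplus D0 \<and> S1 \<in> dplus D1 \<and>
           forall_D D0 S0 (\<lambda>s0. forall_D D1 S1 (\<lambda>s1. \<forall>k\<in>K. P k s0 s1 = v k))"
    by (rule insert.IH) (use insert.prems in auto)
  then obtain S0 S1 v where S: "S0 \<in> dplus D0" "S1 \<in> dplus D1"
    "forall_D D0 S0 (\<lambda>s0. forall_D D1 S1 (\<lambda>s1. \<forall>k\<in>K. P k s0 s1 = v k))" by blast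
  have D0': "inf D0 (principal S0) \<noteq> bot" using S(1) by (rule dplus_nonbot)
  have D1': "inf D1 (principal S1) \<noteq> bot" using S(2) by (rule dplus_nonbot)
  obtain S0' S1' w where S': "S0' \<in> dplus (inf D0 (principal S0))" "S1' \<in> dplus (inf D1 (principal S1))"
    "forall_D (inf D0 (principal S0)) S0' (\<lambda>s0. forall_D (inf D1 (principal S1)) S1' (\<lambda>s1. P k s0 s1 = w))"
    using bool_lemma[OF D0' D1' insert.prems(3)[of k]] by blast
  show ?case
  proof (intro exI[of _ "S0 \<inter> S0'"] exI[of _ "S1 \<inter> S1'"] exI[of _ "v(k := w)"] conjI)
    show "S0 \<inter> S0' \<in> dplus D0" using S'(1)
      by (simp add: dplus_iff frequently_def eventually_inf_principal)
    show "S1 \<inter> S1' \<in> dplus D1" using S'(2)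
      by (simp add: dplus_iff frequently_def eventually_inf_principal)
    have A: "eventually (\<lambda>s0. s0 \<in> S0 \<longrightarrow> eventually (\<lambda>s1. s1 \<in> S1 \<longrightarrow> (\<forall>k\<in>K. P k s0 s1 = v k)) D1) D0"
      using S(3) by (simp add: forall_D_iff)
    have B: "eventually (\<lambda>s0. s0 \<in> S0 \<longrightarrow> s0 \<in> S0' \<longrightarrow> eventually (\<lambda>s1. s1 \<in> S1 \<longrightarrow> s1 \<in> S1' \<longrightarrow> P k s0 s1 = w) D1) D0"
      using S'(3) by (simp add: forall_D_iff eventually_inf_principal)
    have "eventually (\<lambda>s0. s0 \<in> S0 \<inter> S0' \<longrightarrow> eventually (\<lambda>s1. s1 \<in> S1 \<inter> S1' \<longrightarrow> (\<forall>k'\<in>insert k K. P k' s0 s1 = (v(k := w)) k')) D1) D0"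
    proof (rule eventually_elim2[OF A B], intro impI)
      fix s0 assume a: "s0 \<in> S0 \<longrightarrow> eventually (\<lambda>s1. s1 \<in> S1 \<longrightarrow> (\<forall>k\<in>K. P k s0 s1 = v k)) D1"
        and b: "s0 \<in> S0 \<longrightarrow> s0 \<in> S0' \<longrightarrow> eventually (\<lambda>s1. s1 \<in> S1 \<longrightarrow> s1 \<in> S1' \<longrightarrow> P k s0 s1 = w) D1"
        and s: "s0 \<in> S0 \<inter> S0'"
      show "eventually (\<lambda>s1. s1 \<in> S1 \<inter> S1' \<longrightarrow> (\<forall>k'\<in>insert k K. P k' s0 s1 = (v(k := w)) k')) D1"
      proof -
        have ea: "eventually (\<lambda>s1. s1 \<in> S1 \<longrightarrow> (\<forall>k\<in>K. P k s0 s1 = v k)) D1" using a s by blast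
        have eb: "eventually (\<lambda>s1. s1 \<in> S1 \<longrightarrow> s1 \<in> S1' \<longrightarrow> P k s0 s1 = w) D1" using b s by blast
        show ?thesis
          by (rule eventually_elim2[OF ea eb]) (use insert.hyps(2) in auto)
      qed
    qed
    then show "forall_D D0 (S0 \<inter> S0') (\<lambda>s0. forall_D D1 (S1 \<inter> S1') (\<lambda>s1. \<forall>k'\<in>insert k K. P k' s0 s1 = (v(k := w)) k'))"
      by (simp add: forall_D_iff)
  qed
qed

lemma evalt_cong: "(\<forall>j\<in>fvt t. e j = e' j) \<Longrightarrow> evalt F e t = evalt F e' t"
proof (induction t)
  case (Fn f ts)
  have "map (evalt F e) ts = map (evalt F e') ts" using Fn by (intro map_cong) auto
  then show ?case by (simp only: evalt.simps)
qed simp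

lemma sat_cong: "(\<forall>j\<in>fv \<phi>. e j = e' j) \<Longrightarrow> sat F R \<phi> e = sat F R \<phi> e'"
proof (induction \<phi> arbitrary: e e')
  case (Eq s t) then show ?case using evalt_cong[of s e e' F] evalt_cong[of t e e' F] by simp
next
  case (Rel r ts) 
  have "map (evalt F e) ts = map (evalt F e') ts" using Rel by (intro map_cong refl evalt_cong) auto
  then show ?case by (simp only: sat.simps)
next
  case (Ex x \<phi>)
  have "\<And>v. sat F R \<phi> (e(x := v)) = sat F R \<phi> (e'(x := v))"
    using Ex.IH Ex.prems by auto
  then show ?case by simp
next
  case (Conj \<phi>1 \<phi>2)
  have "sat F R \<phi>1 e = sat F R \<phi>1 e'" using Conj by auto
  moreover have "sat F R \<phi>2 e = sat F R \<phi>2 e'" using Conj by auto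
  ultimately show ?case by simp
qed auto

lemma finite_fvt: "finite (fvt t)" by (induction t) auto
lemma finite_fv: "finite (fv \<phi>)" by (induction \<phi>) (auto simp: finite_fvt)

theorem claim8p1:
  fixes F :: "'f \<Rightarrow> 'a list \<Rightarrow> 'a" and R :: "'r \<Rightarrow> 'a list \<Rightarrow> bool"
    and D0 :: "'i filter" and D1 :: "'j filter"
    and m0 m1 :: nat
    and a0 :: "'i \<Rightarrow> 'a list" and a1 :: "'j \<Rightarrow> 'a list"
    and C :: "'a set" and \<Delta> :: "('f, 'r) fm set"
  assumes "NIP F R"
    and "D0 \<noteq> bot" and "D1 \<noteq> bot"
    and "\<forall>t. length (a0 t) = m0" and "\<forall>t. length (a1 t) = m1"
    and "finite C" and "finite \<Delta>"
  shows "\<exists>S0 S1 q. S0 \<in> dplus D0 \<and> S1 \<in> dplus D1 \<and>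
           forall_D D0 S0 (\<lambda>s0. forall_D D1 S1 (\<lambda>s1.
              q = tp_Delta F R \<Delta> (a0 s0 @ a1 s1) C))"
proof -
  note nip = assms(1) and D0 = assms(2) and D1 = assms(3) and len0 = assms(4) and len1 = assms(5)
    and finC = assms(6) and finD = assms(7)
  define L where "L = m0 + m1"
  define N :: "('f, 'r) fm \<Rightarrow> nat" where "N = (\<lambda>\<phi>. if fv \<phi> = {} then 0 else Suc (Max (fv \<phi>)))"
  have fvN: "j < N \<phi>" if "j \<in> fv \<phi>" for j \<phi>
    using that finite_fv[of \<phi>] unfolding N_def by (auto simp: le_imp_less_Suc)
  define M where "M = Max (N ` \<Delta>)"
  define K where "K = {(\<phi>, cs). \<phi> \<in> \<Delta> \<and> set cs \<subseteq> C \<and> length cs \<le> N \<phi>}"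
  have "K \<subseteq> \<Delta> \<times> {cs. set cs \<subseteq> C \<and> length cs \<le> M}"
    unfolding K_def M_def using finD by (auto intro: le_trans[OF _ Max_ge])
  moreover have "finite (\<Delta> \<times> {cs. set cs \<subseteq> C \<and> length cs \<le> M})"
    using finD finC by (intro finite_cartesian_product finite_lists_length_le)
  ultimately have finK: "finite K" by (rule finite_subset)
  define P :: "(('f, 'r) fm \<times> 'a list) \<Rightarrow> 'i \<Rightarrow> 'j \<Rightarrow> bool" where
    "P = (\<lambda>(\<phi>, cs) s0 s1. sat F R \<phi> (\<lambda>j. (a0 s0 @ a1 s1 @ cs) ! j))"
  have noIP: "\<not> (\<forall>n. \<exists>s0::nat\<Rightarrow>'i. \<forall>S\<subseteq>{..<n}. \<exists>s1. \<forall>i<n. P k (s0 i) s1 \<longleftrightarrow> i \<in> S)" for k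
  proof
    assume H: "\<forall>n. \<exists>s0::nat\<Rightarrow>'i. \<forall>S\<subseteq>{..<n}. \<exists>s1. \<forall>i<n. P k (s0 i) s1 \<longleftrightarrow> i \<in> S"
    obtain \<phi> cs where k: "k = (\<phi>, cs)" by fastforce
    have "has_IP F R \<phi> m0"
      unfolding has_IP_def
    proof
      fix n
      obtain s0 :: "nat \<Rightarrow> 'i" where s0: "\<forall>S\<subseteq>{..<n}. \<exists>s1. \<forall>i<n. P k (s0 i) s1 \<longleftrightarrow> i \<in> S"
        using H by blast
      show "\<exists>a. (\<forall>i<n. length (a i) = m0) \<and>
          (\<forall>S\<subseteq>{..<n}. \<exists>b. \<forall>i<n. sat F R \<phi> (env (a i) b) = (i \<in> S))"
      proof (intro exI[of _ "\<lambda>i. a0 (s0 i)"] conjI allI impI)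
        fix i show "length (a0 (s0 i)) = m0" using len0 by simp
      next
        fix S :: "nat set" assume "S \<subseteq> {..<n}"
        then obtain s1 where s1: "\<forall>i<n. P k (s0 i) s1 \<longleftrightarrow> i \<in> S" using s0 by blast
        have e: "env (a0 (s0 i)) (\<lambda>j. (a1 s1 @ cs) ! (j - m0)) = (\<lambda>j. (a0 (s0 i) @ a1 s1 @ cs) ! j)" for i
          unfolding env_def using len0 by (auto simp: nth_append)
        show "\<exists>b. \<forall>i<n. sat F R \<phi> (env (a0 (s0 i)) b) = (i \<in> S)"
          by (intro exI[of _ "\<lambda>j. (a1 s1 @ cs) ! (j - m0)"]) (use s1 in \<open>simp add: e k P_def\<close>)
      qed
    qed
    then show False using nip unfolding NIP_def by blast
  qed
  obtain S0 S1 v where S: "S0 \<in> dplus D0" "S1 \<in> dplus D1"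
    "forall_D D0 S0 (\<lambda>s0. forall_D D1 S1 (\<lambda>s1. \<forall>k\<in>K. P k s0 s1 = v k))"
    using multi_lemma[of K P, OF finK noIP D0 D1] by blast
  define q where "q = {(\<phi>, cs, t). \<phi> \<in> \<Delta> \<and> set cs \<subseteq> C \<and> fv \<phi> \<subseteq> {..<L + length cs}
        \<and> v (\<phi>, take (N \<phi> - L) cs) = t}"
  have key: "q = tp_Delta F R \<Delta> (a0 s0 @ a1 s1) C" if H: "\<forall>k\<in>K. P k s0 s1 = v k" for s0 s1
  proof -
    have lxs: "length (a0 s0 @ a1 s1) = L" using len0 len1 L_def by simp
    have eqv: "sat F R \<phi> (\<lambda>j. ((a0 s0 @ a1 s1) @ cs) ! j) = v (\<phi>, take (N \<phi> - L) cs)"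
      if c: "\<phi> \<in> \<Delta>" "set cs \<subseteq> C" "fv \<phi> \<subseteq> {..<L + length cs}" for \<phi> cs
    proof -
      have inK: "(\<phi>, take (N \<phi> - L) cs) \<in> K" unfolding K_def using c
        by (auto dest: in_set_takeD)
      have "sat F R \<phi> (\<lambda>j. ((a0 s0 @ a1 s1) @ cs) ! j) =
            sat F R \<phi> (\<lambda>j. ((a0 s0 @ a1 s1) @ take (N \<phi> - L) cs) ! j)"
      proof (rule sat_cong, rule ballI)
        fix j assume j: "j \<in> fv \<phi>"
        have "j < N \<phi>" using fvN j by blast
        moreover have "j < L + length cs" using c(3) j by auto
        ultimately show "((a0 s0 @ a1 s1) @ cs) ! j = ((a0 s0 @ a1 s1) @ take (N \<phi> - L) cs) ! j"
          using lxs by (auto simp: nth_append)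
      qed
      also have "\<dots> = P (\<phi>, take (N \<phi> - L) cs) s0 s1" unfolding P_def by simp
      also have "\<dots> = v (\<phi>, take (N \<phi> - L) cs)" using H inK by blast
      finally show ?thesis .
    qed
    show ?thesis
      unfolding q_def tp_Delta_def lxs using eqv by auto
  qed
  show ?thesis
  proof (intro exI[of _ S0] exI[of _ S1] exI[of _ q] conjI S(1) S(2))
    show "forall_D D0 S0 (\<lambda>s0. forall_D D1 S1 (\<lambda>s1. q = tp_Delta F R \<Delta> (a0 s0 @ a1 s1) C))"
      using S(3) unfolding forall_D_iff
    proof (elim eventually_mono, intro impI)
      fix x assume "x \<in> S0 \<longrightarrow> (\<forall>\<^sub>F xa in D1. xa \<in> S1 \<longrightarrow> (\<forall>k\<in>K. P k x xa = v k))" "x \<in> S0"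
      then have "\<forall>\<^sub>F xa in D1. xa \<in> S1 \<longrightarrow> (\<forall>k\<in>K. P k x xa = v k)" by blast
      then show "\<forall>\<^sub>F xa in D1. xa \<in> S1 \<longrightarrow> q = tp_Delta F R \<Delta> (a0 x @ a1 xa) C"
        by (rule eventually_mono) (use key in blast)
    qed
  qed
qed

end
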